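(* Let $\Omega\subset\mathbb{R}^3$ be a domain and $\mathbf{x}=\boldsymbol{\chi}(\mathbf{X})$ a smooth, one-to-one, invertible map of $\Omega$ onto $\omega$, with deformation gradient $F_{iI}=\partial x_i/\partial X_I$, Jacobian $\Lambda=\det\mathbf{F}>0$, and polar decomposition $\mathbf{F}=\mathbf{V}\mathbf{R}$ ($\mathbf{R}$ proper orthogonal, $\mathbf{V}$ symmetric positive definite with $\mathbf{V}^2=\mathbf{F}\mathbf{F}^t$). Suppose the rotation $\mathbf{R}$ is constant. Let $\kappa_0,\rho_0>0$ be constants. Then the normal acoustic fluid with energy density $$E_0=\kappa_0\big(\partial U_I/\partial X_I\big)^2+\rho_0\,\dot{\mathbf{U}}\cdot\dot{\mathbf{U}}\quad\text{in }\Omega$$ is mapped to a metafluid with isotropic inertia, with energy density $$E=\lambda\big(V_{ij}\,\partial u_j/\partial x_i\big)^2+\rho\,\dot{\mathbf{u}}\cdot\dot{\mathbf{u}}\quad\text{in }\omega,\qquad \lambda=\Lambda^{-1}\kappa_0,\quad \rho=\Lambda^{-1}\rho_0,$$ in the sense that these energy densities are equivalent ($E\,\mathrm{d}v=E_0\,\mathrm{d}V$) under the correspondence of displacements $\mathbf{u}=\mathbf{R}\mathbf{U}$. Moreover, the total mass $\int_\omega\rho\,\mathrm{d}v$ of the deformed region equals the total mass $\int_\Omega\rho_0\,\mathrm{d}V$ of $\Omega$.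
   Context: Repeated indices are summed; upper-case indices refer to undeformed coordinates $\mathbf{X}$, lower-case to deformed coordinates $\mathbf{x}$; $\mathrm{d}v=\Lambda\,\mathrm{d}V$. Quantities in $\omega$ are evaluated at $\mathbf{x}=\boldsymbol{\chi}(\mathbf{X})$. *)

theory Defs
  imports "HOL-Analysis.Analysis"
begin

(* Spatial gradient matrix of a time-dependent vector field W(y,t) at (y,t):
   grad_field W t y $ i $ j = \<partial> W_i / \<partial> y_j *)
definition grad_field :: "(real^3 \<Rightarrow> real \<Rightarrow> real^3) \<Rightarrow> real \<Rightarrow> real^3 \<Rightarrow> real^3^3" where
  "grad_field W t y = jacobian (\<lambda>z. W z t) (at y)"

definition vel_field :: "(real^3 \<Rightarrow> real \<Rightarrow> real^3) \<Rightarrow> real \<Rightarrow> real^3 \<Rightarrow> real^3" where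
  "vel_field W t y = vector_derivative (\<lambda>s. W y s) (at t)"

definition E0_density :: "real \<Rightarrow> real \<Rightarrow> (real^3 \<Rightarrow> real \<Rightarrow> real^3) \<Rightarrow> real \<Rightarrow> real^3 \<Rightarrow> real" where
  "E0_density \<kappa>0 \<rho>0 U t X =
     \<kappa>0 * (\<Sum>I\<in>UNIV. grad_field U t X $ I $ I)\<^sup>2 + \<rho>0 * (vel_field U t X \<bullet> vel_field U t X)"

definition E_density :: "real \<Rightarrow> real \<Rightarrow> real^3^3 \<Rightarrow> (real^3 \<Rightarrow> real \<Rightarrow> real^3) \<Rightarrow> real \<Rightarrow> real^3 \<Rightarrow> real" where
  "E_density lam \<rho> V u t x =
     lam * (\<Sum>i\<in>UNIV. \<Sum>j\<in>UNIV. V $ i $ j * grad_field u t x $ j $ i)\<^sup>2 + \<rho> * (vel_field u t x \<bullet> vel_field u t x)"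

end

theory Submission
  imports Defs "HOL-Homology.Invariance_of_Domain"
begin

lemma cont_det: fixes F :: "'a::topological_space \<Rightarrow> real^'n^'n"
  assumes "continuous_on S F" shows "continuous_on S (\<lambda>x. det (F x))"
  unfolding det_def using assms by (intro continuous_intros) auto

lemma NN: fixes h :: "real^'n \<Rightarrow> real"
  assumes A: "open A" and c: "continuous_on A h" and nn: "\<And>x. x\<in>A \<Longrightarrow> 0 \<le> h x"
  shows "(\<integral>\<^sup>+x\<in>A. ennreal (h x) \<partial>lborel) = (if h absolutely_integrable_on A then ennreal (integral A h) else \<infinity>)"
proof -
  let ?f = "\<lambda>x. indicator A x *\<^sub>R h x"
  have meas: "?f \<in> borel_measurable borel"
    using A c by (intro borel_measurable_continuous_on_indicator) auto
  have eq: "(\<integral>\<^sup>+x\<in>A. ennreal (h x) \<partial>lborel) = (\<integral>\<^sup>+x. ennreal (?f x) \<partial>lborel)"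
    by (intro nn_integral_cong) (auto simp: indicator_def)
  show ?thesis
  proof (cases "h absolutely_integrable_on A")
    case True
    then have I: "(h has_integral integral A h) A" using absolutely_integrable_on_def integrable_integral by blast
    have "integral\<^sup>N lborel (\<lambda>x. ennreal (h x) * indicator A x) = ennreal (integral A h)"
      by (rule nn_integral_has_integral_lebesgue'[OF nn I])
    moreover have "(\<integral>\<^sup>+x\<in>A. ennreal (h x) \<partial>lborel) = integral\<^sup>N lborel (\<lambda>x. ennreal (h x) * indicator A x)"
      by simp
    ultimately show ?thesis using True by simp
  next
    case False
    have "\<not> (\<integral>\<^sup>+x. ennreal (?f x) \<partial>lborel) < \<infinity>"
    proof
      assume "(\<integral>\<^sup>+x. ennreal (?f x) \<partial>lborel) < \<infinity>"
      then have "?f integrable_on UNIV"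
        using meas nn by (intro nn_integral_integrable_on) (auto simp: indicator_def)
      moreover have "?f = (\<lambda>x. if x \<in> A then h x else 0)" by (auto simp: indicator_def)
      ultimately have "h integrable_on A" using Henstock_Kurzweil_Integration.integrable_restrict_UNIV[of A h] by simp
      then have "h absolutely_integrable_on A" using nn by (rule nonnegative_absolutely_integrable_1)
      with False show False by simp
    qed
    then have "(\<integral>\<^sup>+x. ennreal (?f x) \<partial>lborel) = \<infinity>" using less_top[of "\<integral>\<^sup>+x. ennreal (?f x) \<partial>lborel"] by simp
    with False eq show ?thesis by simp
  qed
qed


theorem lemma1:
  fixes \<Omega> :: "(real^3) set"
    and chi :: "real^3 \<Rightarrow> real^3"
    and F V :: "real^3 \<Rightarrow> real^3^3"
    and R :: "real^3^3"
    and \<kappa>0 \<rho>0 :: real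
    and U :: "real^3 \<Rightarrow> real \<Rightarrow> real^3"
  assumes dom: "open \<Omega>" "connected \<Omega>" "\<Omega> \<noteq> {}"
    and deriv: "\<And>X. X \<in> \<Omega> \<Longrightarrow> (chi has_derivative (\<lambda>h. F X *v h)) (at X)"
    and C1: "continuous_on \<Omega> F"
    and inj: "inj_on chi \<Omega>"
    and Jpos: "\<And>X. X \<in> \<Omega> \<Longrightarrow> det (F X) > 0"
    and R_rot: "orthogonal_matrix R" "det R = 1"
    and V_sym: "\<And>X. X \<in> \<Omega> \<Longrightarrow> transpose (V X) = V X"
    and V_pd: "\<And>X v. X \<in> \<Omega> \<Longrightarrow> v \<noteq> 0 \<Longrightarrow> v \<bullet> (V X *v v) > 0"
    and V_sq: "\<And>X. X \<in> \<Omega> \<Longrightarrow> V X ** V X = F X ** transpose (F X)"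
    and polar: "\<And>X. X \<in> \<Omega> \<Longrightarrow> F X = V X ** R"
    and pos: "\<kappa>0 > 0" "\<rho>0 > 0"
    and U_diff_X: "\<And>X t. X \<in> \<Omega> \<Longrightarrow> (\<lambda>Y. U Y t) differentiable (at X)"
    and U_diff_t: "\<And>X t. X \<in> \<Omega> \<Longrightarrow> (\<lambda>s. U X s) differentiable (at t)"
  shows "(\<forall>X\<in>\<Omega>. \<forall>t.
            let u = (\<lambda>x s. R *v U (inv_into \<Omega> chi x) s);
                \<Lambda> = det (F X)
            in E_density (\<kappa>0 / \<Lambda>) (\<rho>0 / \<Lambda>) (V X) u t (chi X) * \<Lambda>
               = E0_density \<kappa>0 \<rho>0 U t X)
       \<and> (\<integral>\<^sup>+ x \<in> chi ` \<Omega>. ennreal (\<rho>0 / det (F (inv_into \<Omega> chi x))) \<partial>lborel)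
           = (\<integral>\<^sup>+ X \<in> \<Omega>. ennreal \<rho>0 \<partial>lborel)"
  proof -
  have contchi: "continuous_on \<Omega> chi"
    using deriv by (meson continuous_at_imp_continuous_on has_derivative_continuous)
  define ginv where "ginv = inv_into \<Omega> chi"
  have gf: "\<And>X. X \<in> \<Omega> \<Longrightarrow> ginv (chi X) = X" unfolding ginv_def using inj by simp
  have openI: "open (chi ` \<Omega>)" using invariance_of_domain[OF contchi dom(1) inj] .
  have contg: "continuous_on (chi ` \<Omega>) ginv"
    using continuous_on_inverse_open[OF dom(1) contchi _ gf] by simp
  have part2: "(\<integral>\<^sup>+ x \<in> chi ` \<Omega>. ennreal (\<rho>0 / det (F (inv_into \<Omega> chi x))) \<partial>lborel)
           = (\<integral>\<^sup>+ X \<in> \<Omega>. ennreal \<rho>0 \<partial>lborel)"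
  proof -
    define g where "g x = \<rho>0 / det (F (ginv x))" for x
    have gim: "ginv ` chi ` \<Omega> \<subseteq> \<Omega>" using gf by auto
    have cg: "continuous_on (chi ` \<Omega>) g"
      unfolding g_def
    proof (intro continuous_on_divide continuous_on_const)
      show "continuous_on (chi ` \<Omega>) (\<lambda>x. det (F (ginv x)))"
        by (intro cont_det continuous_on_compose2[OF C1 contg gim])
      show "\<forall>x\<in>chi ` \<Omega>. det (F (ginv x)) \<noteq> 0"
      proof
        fix x assume "x \<in> chi ` \<Omega>"
        then obtain X where X: "X \<in> \<Omega>" "x = chi X" by blast
        show "det (F (ginv x)) \<noteq> 0"
          using gf[OF X(1)] Jpos[OF X(1)] X(2) by simp
      qed
    qed
    have gnn: "\<And>x. x \<in> chi ` \<Omega> \<Longrightarrow> 0 \<le> g x"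
      unfolding g_def using gf Jpos pos by (auto intro!: divide_nonneg_pos less_imp_le)
    have L: "(\<integral>\<^sup>+ x \<in> chi ` \<Omega>. ennreal (g x) \<partial>lborel) =
        (if g absolutely_integrable_on chi ` \<Omega> then ennreal (integral (chi ` \<Omega>) g) else \<infinity>)"
      by (rule NN[OF openI cg gnn])
    have R: "(\<integral>\<^sup>+ X \<in> \<Omega>. ennreal \<rho>0 \<partial>lborel) =
        (if (\<lambda>_. \<rho>0) absolutely_integrable_on \<Omega> then ennreal (integral \<Omega> (\<lambda>_. \<rho>0)) else \<infinity>)"
      by (rule NN[OF dom(1)]) (use pos in auto)
    have Dg: "\<And>X. X \<in> \<Omega> \<Longrightarrow> \<bar>det (matrix (\<lambda>h. F X *v h))\<bar> * g (chi X) = \<rho>0"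
    proof -
      fix X assume X: "X \<in> \<Omega>"
      have "det (F X) > 0" using Jpos X by blast
      then show "\<bar>det (matrix (\<lambda>h. F X *v h))\<bar> * g (chi X) = \<rho>0"
        unfolding g_def using gf[OF X] by simp
    qed
    have CV: "(\<lambda>X. \<bar>det (matrix (\<lambda>h. F X *v h))\<bar> * g (chi X)) absolutely_integrable_on \<Omega> \<and>
           integral \<Omega> (\<lambda>X. \<bar>det (matrix (\<lambda>h. F X *v h))\<bar> * g (chi X)) = b
     \<longleftrightarrow> g absolutely_integrable_on (chi ` \<Omega>) \<and> integral (chi ` \<Omega>) g = b" for b
    proof -
      have "(\<lambda>X. \<bar>det (matrix (\<lambda>h. F X *v h))\<bar> *\<^sub>R vec (g (chi X)) :: real^1) absolutely_integrable_on \<Omega> \<and>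
           integral \<Omega> (\<lambda>X. \<bar>det (matrix (\<lambda>h. F X *v h))\<bar> *\<^sub>R vec (g (chi X))) = (vec b :: real^1)
         \<longleftrightarrow> (\<lambda>x. vec (g x) :: real^1) absolutely_integrable_on (chi ` \<Omega>) \<and>
           integral (chi ` \<Omega>) (\<lambda>x. vec (g x)) = (vec b :: real^1)"
      proof (rule has_absolute_integral_change_of_variables)
        show "\<Omega> \<in> sets lebesgue" using dom(1) by simp
        show "\<And>x. x \<in> \<Omega> \<Longrightarrow> (chi has_derivative (\<lambda>h. F x *v h)) (at x within \<Omega>)"
          using deriv by (rule has_derivative_at_withinI)
        show "inj_on chi \<Omega>" by (rule inj)
      qed
      thus ?thesis
        by (simp add: absolutely_integrable_on_1_iff integral_on_1_eq)
    qed
    have ai: "(\<lambda>X. \<bar>det (matrix (\<lambda>h. F X *v h))\<bar> * g (chi X)) absolutely_integrable_on \<Omega>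
        \<longleftrightarrow> (\<lambda>_. \<rho>0) absolutely_integrable_on \<Omega>"
      unfolding absolutely_integrable_on_def using Dg
      by (intro conj_cong integrable_cong) auto
    have ii: "integral \<Omega> (\<lambda>X. \<bar>det (matrix (\<lambda>h. F X *v h))\<bar> * g (chi X)) = integral \<Omega> (\<lambda>_. \<rho>0)"
      using Dg by (intro integral_cong) auto
    have "g absolutely_integrable_on chi ` \<Omega> \<longleftrightarrow> (\<lambda>_. \<rho>0) absolutely_integrable_on \<Omega>"
      using CV ai by blast
    moreover have "(\<lambda>_. \<rho>0) absolutely_integrable_on \<Omega> \<Longrightarrow> integral (chi ` \<Omega>) g = integral \<Omega> (\<lambda>_. \<rho>0)"
      using CV ai ii by metis
    ultimately show ?thesis using L R unfolding g_def ginv_def by (cases "(\<lambda>_. \<rho>0) absolutely_integrable_on \<Omega>"; simp)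
  qed
  have part1: "\<forall>X\<in>\<Omega>. \<forall>t.
            let u = (\<lambda>x s. R *v U (inv_into \<Omega> chi x) s);
                \<Lambda> = det (F X)
            in E_density (\<kappa>0 / \<Lambda>) (\<rho>0 / \<Lambda>) (V X) u t (chi X) * \<Lambda>
               = E0_density \<kappa>0 \<rho>0 U t X"
  proof (intro ballI allI)
    fix X t assume X: "X \<in> \<Omega>"
    define u where "u = (\<lambda>x s. R *v U (ginv x) s)"
    have Jp: "det (F X) > 0" using Jpos X by blast
    then have "invertible (F X)" using invertible_det_nz by force
    then obtain Fi where Fi: "F X ** Fi = mat 1" "Fi ** F X = mat 1" unfolding invertible_def by blast
    have dg: "(ginv has_derivative (\<lambda>h. Fi *v h)) (at (chi X))"
    proof (rule has_derivative_inverse_strong[OF dom(1) X contchi gf deriv[OF X]])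
      show "(\<lambda>h. F X *v h) \<circ> (\<lambda>h. Fi *v h) = id"
        using Fi by (auto simp: fun_eq_iff matrix_vector_mul_assoc)
    qed (auto)
    define GU where "GU = grad_field U t X"
    have dU: "((\<lambda>Y. U Y t) has_derivative (\<lambda>h. GU *v h)) (at X)"
      unfolding GU_def grad_field_def using U_diff_X[OF X] jacobian_works by blast
    have dU': "((\<lambda>Y. U Y t) has_derivative (\<lambda>h. GU *v h)) (at (ginv (chi X)))"
      using dU gf[OF X] by simp
    have du: "((\<lambda>x. u x t) has_derivative (\<lambda>h. (R ** GU ** Fi) *v h)) (at (chi X))"
    proof -
      have "((\<lambda>x. U (ginv x) t) has_derivative (\<lambda>h. GU *v (Fi *v h))) (at (chi X))"
        using diff_chain_at[OF dg dU'] by (simp add: o_def)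
      then have "((\<lambda>x. R *v U (ginv x) t) has_derivative (\<lambda>h. R *v (GU *v (Fi *v h)))) (at (chi X))"
        by (intro bounded_linear.has_derivative[OF matrix_vector_mul_bounded_linear])
      then show ?thesis unfolding u_def by (simp add: matrix_vector_mul_assoc matrix_mul_assoc)
    qed
    have Gu: "grad_field u t (chi X) = R ** GU ** Fi"
      unfolding grad_field_def jacobian_def
      using frechet_derivative_at[OF du] by (metis matrix_of_matrix_vector_mul)
    have tr: "(\<Sum>i\<in>UNIV. \<Sum>j\<in>UNIV. V X $ i $ j * grad_field u t (chi X) $ j $ i) = (\<Sum>I\<in>UNIV. GU $ I $ I)"
    proof -
      have "(\<Sum>i\<in>UNIV. \<Sum>j\<in>UNIV. V X $ i $ j * grad_field u t (chi X) $ j $ i) = trace (V X ** (R ** GU ** Fi))"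
        by (simp add: Gu trace_def matrix_matrix_mult_def)
      also have "V X ** (R ** GU ** Fi) = F X ** (GU ** Fi)"
        using polar[OF X] by (simp add: matrix_mul_assoc)
      also have "trace (F X ** (GU ** Fi)) = trace (GU ** Fi ** F X)" by (rule trace_mul_sym)
      also have "GU ** Fi ** F X = GU" using Fi by (simp add: matrix_mul_assoc[symmetric] matrix_mul_rid)
      finally show ?thesis by (simp add: trace_def)
    qed
    define v where "v = vel_field U t X"
    have vU: "((\<lambda>s. U X s) has_vector_derivative v) (at t)"
      unfolding v_def vel_field_def using U_diff_t[OF X] vector_derivative_works by blast
    have vu: "vel_field u t (chi X) = R *v v"
    proof -
      have "((\<lambda>s. R *v U X s) has_vector_derivative R *v v) (at t)"
      proof -
        have "((\<lambda>s. R *v U X s) has_derivative (\<lambda>x. R *v (x *\<^sub>R v))) (at t)"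
          by (rule bounded_linear.has_derivative[OF matrix_vector_mul_bounded_linear])
             (use vU in \<open>simp add: has_vector_derivative_def\<close>)
        then show ?thesis unfolding has_vector_derivative_def
          by (simp add: matrix_vector_mult_scaleR)
      qed
      then show ?thesis unfolding vel_field_def u_def using gf[OF X]
        by (simp add: vector_derivative_at)
    qed
    have ot: "orthogonal_transformation (\<lambda>x. R *v x)"
      using R_rot(1) by (simp add: orthogonal_transformation_matrix)
    have vv: "(R *v v) \<bullet> (R *v v) = v \<bullet> v"
      using ot unfolding orthogonal_transformation_def by blast
    show "let u = (\<lambda>x s. R *v U (inv_into \<Omega> chi x) s);
                \<Lambda> = det (F X)
            in E_density (\<kappa>0 / \<Lambda>) (\<rho>0 / \<Lambda>) (V X) u t (chi X) * \<Lambda>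
               = E0_density \<kappa>0 \<rho>0 U t X"
      unfolding Let_def u_def[symmetric, unfolded ginv_def] E_density_def E0_density_def
      using tr vu vv Jp unfolding GU_def v_def by (simp add: field_simps)
  qed
  show ?thesis using part1 part2 by blast
qed

end
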